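(* Let $0\to U\to M\to N\to 0$ be an exact sequence of graded $R$-modules (graded either in the multigraded or in the standard graded sense). If $U$ and $N$ have Stanley decompositions, then so does $M$, and $$\operatorname{Stdepth} M\ge \min(\operatorname{Stdepth} U,\operatorname{Stdepth} N).$$ Likewise, if $U$ and $N$ have Hilbert decompositions, then so does $M$, and $\operatorname{Hdepth} M\ge \min(\operatorname{Hdepth} U,\operatorname{Hdepth} N)$.
   Context: Let $K$ be a field and $R=K[X_1,\dots,X_n]$, considered either with the multigrading ($\mathbb{Z}^n$-grading with $\deg X_i=e_i$, the $i$-th unit vector) or with the standard grading ($\mathbb{Z}$-grading with $\deg X_i=1$). All modules are finitely generated graded $R$-modules. A graded retract of $R$ is a graded $K$-subalgebra $S\subseteq R$ for which there is a graded $K$-algebra epimorphism $\pi:R\to S$ with $\pi|_S=\mathrm{id}_S$ (in the multigraded case: subalgebras generated by a subset of the indeterminates; in the standard graded case: subalgebras generated by a set of linear forms). A Stanley decomposition of $M$ is a finite family $(S_i,x_i)_{i\in I}$ with $x_i\in M$ homogeneous, $S_i$ a graded retract of $R$, $S_i\cap\operatorname{Ann}(x_i)=0$, and $M=\bigoplus_{i\in I}S_ix_i$ as graded $K$-vector spaces. A Hilbert decomposition of $M$ is a finite family $(S_i,s_i)_{i\in I}$ with $s_i$ a degree ($s_i\in\mathbb{Z}^n$, resp. $\mathbb{Z}$), $S_i$ a graded retract of $R$, and $M\cong\bigoplus_{i\in I}S_i(-s_i)$ as graded $K$-vector spaces. The depth of such a decomposition is $\min_{i\in I}\dim S_i$ (the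 depth of the $R$-module $\bigoplus_i S_i$). $\operatorname{Stdepth}M$ (resp. $\operatorname{Hdepth}M$) is the maximal depth of a Stanley (resp. Hilbert) decomposition of $M$; by convention $\operatorname{Stdepth}0=\infty$ (and likewise for Hdepth). *)

theory Defs
  imports "HOL-Library.Poly_Mapping" "HOL-Library.Function_Algebras" "HOL-Library.Extended_Nat"
begin

text \<open>Polynomials in the variables indexed by the finite type 'v with coefficients in 'k:
  finitely supported maps from monomials (exponent vectors) to coefficients.\<close>
type_synonym ('v, 'k) mpoly = "('v \<Rightarrow>\<^sub>0 nat) \<Rightarrow>\<^sub>0 'k"

definition const :: "'k::zero \<Rightarrow> ('v, 'k) mpoly" where
  "const c = Poly_Mapping.single 0 c"

definition Var :: "'v \<Rightarrow> ('v, 'k::{zero,one}) mpoly" where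
  "Var i = Poly_Mapping.single (Poly_Mapping.single i 1) 1"

definition homog :: "(('v \<Rightarrow>\<^sub>0 nat) \<Rightarrow> 'g) \<Rightarrow> 'g \<Rightarrow> ('v, 'k::zero) mpoly set" where
  "homog mdeg a = {p. \<forall>\<alpha>\<in>Poly_Mapping.keys p. mdeg \<alpha> = a}"

definition mdeg_multi :: "('v \<Rightarrow>\<^sub>0 nat) \<Rightarrow> ('v \<Rightarrow> int)" where
  "mdeg_multi \<alpha> = (\<lambda>i. int (Poly_Mapping.lookup \<alpha> i))"

definition mdeg_std :: "('v \<Rightarrow>\<^sub>0 nat) \<Rightarrow> int" where
  "mdeg_std \<alpha> = int (sum (Poly_Mapping.lookup \<alpha>) (Poly_Mapping.keys \<alpha>))"

definition alg_gen :: "('v, 'k::comm_ring_1) mpoly set \<Rightarrow> ('v, 'k) mpoly set" where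
  "alg_gen L = \<Inter>{T. (\<forall>c. const c \<in> T) \<and> L \<subseteq> T \<and> (\<forall>a\<in>T. \<forall>b\<in>T. a + b \<in> T \<and> a * b \<in> T)}"

definition lin_indep :: "('v, 'k::comm_ring_1) mpoly set \<Rightarrow> bool" where
  "lin_indep L \<longleftrightarrow> finite L \<and>
     (\<forall>a. (\<Sum>l\<in>L. const (a l) * l) = 0 \<longrightarrow> (\<forall>l\<in>L. a l = 0))"

text \<open>Graded retracts. Multigraded case: subalgebras generated by a subset of the
  indeterminates. Standard graded case: subalgebras generated by a set of linear forms.\<close>
definition retract_multi :: "('v, 'k::comm_ring_1) mpoly set \<Rightarrow> bool" where
  "retract_multi S \<longleftrightarrow> (\<exists>A. S = alg_gen (Var ` A))"

definition retract_std :: "('v, 'k::comm_ring_1) mpoly set \<Rightarrow> bool" where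
  "retract_std S \<longleftrightarrow> (\<exists>L. L \<subseteq> homog mdeg_std 1 \<and> S = alg_gen L)"

text \<open>Dimension of a graded retract S: the K-dimension of its space of linear forms
  (which is the Krull dimension of the polynomial ring S in either setting).\<close>
definition rdim :: "('v, 'k::comm_ring_1) mpoly set \<Rightarrow> nat" where
  "rdim S = Max {card L | L. L \<subseteq> S \<inter> homog mdeg_std 1 \<and> lin_indep L}"

definition graded_module ::
  "(('v \<Rightarrow>\<^sub>0 nat) \<Rightarrow> 'g::ab_group_add) \<Rightarrow> (('v, 'k::field) mpoly \<Rightarrow> 'm::ab_group_add \<Rightarrow> 'm)
     \<Rightarrow> ('g \<Rightarrow> 'm set) \<Rightarrow> bool" where
  "graded_module mdeg smul gr \<longleftrightarrow>
     module smul \<and>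
     (\<forall>d. 0 \<in> gr d \<and> (\<forall>x\<in>gr d. \<forall>y\<in>gr d. x + y \<in> gr d)
          \<and> (\<forall>c. \<forall>x\<in>gr d. smul (const c) x \<in> gr d)) \<and>
     (\<forall>m. \<exists>!c. finite {d. c d \<noteq> 0} \<and> (\<forall>d. c d \<in> gr d) \<and> m = (\<Sum>d\<in>{d. c d \<noteq> 0}. c d)) \<and>
     (\<forall>a d p x. p \<in> homog mdeg a \<longrightarrow> x \<in> gr d \<longrightarrow> smul p x \<in> gr (a + d)) \<and>
     (\<exists>F. finite F \<and> (\<forall>m. \<exists>c. m = (\<Sum>x\<in>F. smul (c x) x)))"

definition graded_hom ::
  "('r \<Rightarrow> 'a::ab_group_add \<Rightarrow> 'a) \<Rightarrow> ('g \<Rightarrow> 'a set) \<Rightarrow> ('r \<Rightarrow> 'b::ab_group_add \<Rightarrow> 'b)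
     \<Rightarrow> ('g \<Rightarrow> 'b set) \<Rightarrow> ('a \<Rightarrow> 'b) \<Rightarrow> bool" where
  "graded_hom smul1 gr1 smul2 gr2 f \<longleftrightarrow>
     (\<forall>x y. f (x + y) = f x + f y) \<and> (\<forall>p x. f (smul1 p x) = smul2 p (f x)) \<and>
     (\<forall>d. f ` gr1 d \<subseteq> gr2 d)"

definition short_exact :: "('a \<Rightarrow> 'b::zero) \<Rightarrow> ('b \<Rightarrow> 'c::zero) \<Rightarrow> bool" where
  "short_exact f g \<longleftrightarrow> inj f \<and> surj g \<and> range f = {m. g m = 0}"

definition stanley_dec ::
  "(('v, 'k::field) mpoly set \<Rightarrow> bool) \<Rightarrow> (('v, 'k) mpoly \<Rightarrow> 'm::ab_group_add \<Rightarrow> 'm)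
     \<Rightarrow> ('g \<Rightarrow> 'm set) \<Rightarrow> (('v, 'k) mpoly set \<times> 'm) list \<Rightarrow> bool" where
  "stanley_dec is_retract smul gr D \<longleftrightarrow>
     (\<forall>i<length D. is_retract (fst (D ! i)) \<and> (\<exists>d. snd (D ! i) \<in> gr d) \<and>
        (\<forall>s\<in>fst (D ! i). smul s (snd (D ! i)) = 0 \<longrightarrow> s = 0)) \<and>
     (\<forall>m. \<exists>!c. (\<forall>i<length D. c i \<in> fst (D ! i)) \<and> (\<forall>i\<ge>length D. c i = 0) \<and>
          m = (\<Sum>i<length D. smul (c i) (snd (D ! i))))"

text \<open>The graded K-vector space (+)_i S_i(-s_i) and its degree d component.\<close>
definition dsum :: "(('v, 'k::zero) mpoly set \<times> 'g) list \<Rightarrow> (nat \<Rightarrow> ('v, 'k) mpoly) set" where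
  "dsum H = {c. (\<forall>i<length H. c i \<in> fst (H ! i)) \<and> (\<forall>i\<ge>length H. c i = 0)}"

definition dsum_deg :: "(('v \<Rightarrow>\<^sub>0 nat) \<Rightarrow> 'g::ab_group_add) \<Rightarrow> (('v, 'k::zero) mpoly set \<times> 'g) list
     \<Rightarrow> 'g \<Rightarrow> (nat \<Rightarrow> ('v, 'k) mpoly) set" where
  "dsum_deg mdeg H d = {c \<in> dsum H. \<forall>i<length H. c i \<in> homog mdeg (d - snd (H ! i))}"

definition hilbert_dec ::
  "(('v, 'k::field) mpoly set \<Rightarrow> bool) \<Rightarrow> (('v \<Rightarrow>\<^sub>0 nat) \<Rightarrow> 'g::ab_group_add)
     \<Rightarrow> (('v, 'k) mpoly \<Rightarrow> 'm::ab_group_add \<Rightarrow> 'm) \<Rightarrow> ('g \<Rightarrow> 'm set)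
     \<Rightarrow> (('v, 'k) mpoly set \<times> 'g) list \<Rightarrow> bool" where
  "hilbert_dec is_retract mdeg smul gr H \<longleftrightarrow>
     (\<forall>i<length H. is_retract (fst (H ! i))) \<and>
     (\<exists>\<phi>. bij_betw \<phi> UNIV (dsum H) \<and> (\<forall>x y. \<phi> (x + y) = \<phi> x + \<phi> y) \<and>
        (\<forall>c x. \<phi> (smul (const c) x) = (\<lambda>i. const c * \<phi> x i)) \<and>
        (\<forall>d. \<phi> ` gr d = dsum_deg mdeg H d))"

definition dec_depth :: "(('v, 'k::comm_ring_1) mpoly set \<times> 'a) list \<Rightarrow> enat" where
  "dec_depth D = (if D = [] then \<infinity> else enat (Min (set (map (\<lambda>p. rdim (fst p)) D))))"

definition has_stanley where
  "has_stanley is_retract smul gr \<longleftrightarrow> (\<exists>D. stanley_dec is_retract smul gr D)"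

definition Stdepth where
  "Stdepth is_retract smul gr = Sup (dec_depth ` {D. stanley_dec is_retract smul gr D})"

definition has_hilbert where
  "has_hilbert is_retract mdeg smul gr \<longleftrightarrow> (\<exists>H. hilbert_dec is_retract mdeg smul gr H)"

definition Hdepth where
  "Hdepth is_retract mdeg smul gr = Sup (dec_depth ` {H. hilbert_dec is_retract mdeg smul gr H})"

end

theory Submission
  imports Defs
begin


lemma const_add: "const (a + b) = const a + (const b :: ('v,'k::comm_ring_1) mpoly)"
  by (simp add: const_def single_add)
lemma const_mult: "const (a * b) = const a * (const b :: ('v,'k::comm_ring_1) mpoly)"
  by (simp add: const_def mult_single)
lemma const_one: "const 1 = (1 :: ('v,'k::comm_ring_1) mpoly)"
  by (simp add: const_def)
lemma const_uminus: "const (- a) = - (const a :: ('v,'k::comm_ring_1) mpoly)"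
  by (simp add: const_def single_uminus)

locale gm =
  fixes mdeg :: "('v \<Rightarrow>\<^sub>0 nat) \<Rightarrow> 'g::ab_group_add"
    and smul :: "('v, 'k::field) mpoly \<Rightarrow> 'm::ab_group_add \<Rightarrow> 'm"
    and gr :: "'g \<Rightarrow> 'm set"
  assumes gm: "graded_module mdeg smul gr"
begin

sublocale module smul using gm unfolding graded_module_def by (elim conjE) assumption

definition sc :: "'k \<Rightarrow> 'm \<Rightarrow> 'm" where "sc c x = smul (const c) x"

lemma vs: "vector_space sc"
  unfolding vector_space_def sc_def
  by (simp add: scale_right_distrib const_add scale_left_distrib const_mult const_one)

lemma G1: "\<forall>d. 0 \<in> gr d \<and> (\<forall>x\<in>gr d. \<forall>y\<in>gr d. x + y \<in> gr d)
          \<and> (\<forall>c. \<forall>x\<in>gr d. smul (const c) x \<in> gr d)"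
  using gm unfolding graded_module_def by (elim conjE) assumption
lemma G2: "\<forall>m. \<exists>!c. finite {d. c d \<noteq> 0} \<and> (\<forall>d. c d \<in> gr d) \<and> m = (\<Sum>d\<in>{d. c d \<noteq> 0}. c d)"
  using gm unfolding graded_module_def by (elim conjE) assumption
lemma G3: "\<forall>a d p x. p \<in> homog mdeg a \<longrightarrow> x \<in> gr d \<longrightarrow> smul p x \<in> gr (a + d)"
  using gm unfolding graded_module_def by (elim conjE) assumption

lemma gr0: "0 \<in> gr d" using G1 by simp
lemma gr_add: "x \<in> gr d \<Longrightarrow> y \<in> gr d \<Longrightarrow> x + y \<in> gr d"
  using G1 by simp
lemma gr_const: "x \<in> gr d \<Longrightarrow> smul (const c) x \<in> gr d"
  using G1 by simp
lemma gr_sc: "x \<in> gr d \<Longrightarrow> sc c x \<in> gr d"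
  unfolding sc_def by (rule gr_const)
lemma gr_neg: "x \<in> gr d \<Longrightarrow> - x \<in> gr d"
proof -
  assume "x \<in> gr d"
  then have "smul (const (-1)) x \<in> gr d" by (rule gr_const)
  then show ?thesis by (simp add: const_uminus const_one)
qed
lemma gr_diff: "x \<in> gr d \<Longrightarrow> y \<in> gr d \<Longrightarrow> x - y \<in> gr d"
  using gr_add[of x d "- y"] gr_neg[of y d] by simp
lemma gr_sum: "(\<And>i. i \<in> A \<Longrightarrow> h i \<in> gr d) \<Longrightarrow> sum h A \<in> gr d"
  by (induction A rule: infinite_finite_induct) (auto simp: gr0 gr_add)
lemma gr_homog: "p \<in> homog mdeg a \<Longrightarrow> x \<in> gr d \<Longrightarrow> smul p x \<in> gr (a + d)"
  using G3 by blast

definition P :: "'m \<Rightarrow> ('g \<Rightarrow> 'm) \<Rightarrow> bool" where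
  "P m c \<longleftrightarrow> finite {d. c d \<noteq> 0} \<and> (\<forall>d. c d \<in> gr d) \<and> m = (\<Sum>d\<in>{d. c d \<noteq> 0}. c d)"

lemma ex1: "\<exists>!c. P m c"
  using G2 unfolding P_def by (rule spec)

definition comp :: "'m \<Rightarrow> 'g \<Rightarrow> 'm" where "comp m = (THE c. P m c)"

lemma compP: "P m (comp m)"
  unfolding comp_def by (rule theI'[OF ex1])

lemma comp_fin: "finite {d. comp m d \<noteq> 0}" and comp_gr: "comp m d \<in> gr d"
  and comp_sum0: "m = (\<Sum>d\<in>{d. comp m d \<noteq> 0}. comp m d)"
  using compP[of m] unfolding P_def by auto

lemma comp_eqI:
  assumes "finite F" "\<And>d. c d \<in> gr d" "\<And>d. d \<notin> F \<Longrightarrow> c d = 0" "m = (\<Sum>d\<in>F. c d)"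
  shows "comp m = c"
proof -
  have sub: "{d. c d \<noteq> 0} \<subseteq> F" using assms(3) by blast
  have "P m c" unfolding P_def
  proof (intro conjI allI)
    show "finite {d. c d \<noteq> 0}" using sub assms(1) finite_subset by blast
    show "c d \<in> gr d" for d by (rule assms(2))
    have "sum c F = sum c {d. c d \<noteq> 0}"
      by (rule sum.mono_neutral_right[OF assms(1) sub]) auto
    with assms(4) show "m = (\<Sum>d\<in>{d. c d \<noteq> 0}. c d)" by (rule trans)
  qed
  then show ?thesis unfolding comp_def by (rule the1_equality[OF ex1])
qed

lemma comp_sumF: assumes "finite F" "{d. comp m d \<noteq> 0} \<subseteq> F" shows "m = (\<Sum>d\<in>F. comp m d)"
proof -
  have "(\<Sum>d\<in>{d. comp m d \<noteq> 0}. comp m d) = (\<Sum>d\<in>F. comp m d)"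
    by (rule sum.mono_neutral_left[OF assms]) auto
  with comp_sum0[of m] show ?thesis by (rule trans)
qed

lemma comp_add: "comp (x + y) = (\<lambda>d. comp x d + comp y d)"
proof (rule comp_eqI[where F = "{d. comp x d \<noteq> 0} \<union> {d. comp y d \<noteq> 0}"])
  show "finite ({d. comp x d \<noteq> 0} \<union> {d. comp y d \<noteq> 0})" using comp_fin by simp
  show "comp x d + comp y d \<in> gr d" for d by (simp add: comp_gr gr_add)
  show "comp x d + comp y d = 0" if "d \<notin> {d. comp x d \<noteq> 0} \<union> {d. comp y d \<noteq> 0}" for d
    using that by simp
  define F where "F = {d. comp x d \<noteq> 0} \<union> {d. comp y d \<noteq> 0}"
  have fF: "finite F" unfolding F_def using comp_fin by simp
  have hx: "x = (\<Sum>d\<in>F. comp x d)" by (rule comp_sumF[OF fF]) (auto simp: F_def)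
  have hy: "y = (\<Sum>d\<in>F. comp y d)" by (rule comp_sumF[OF fF]) (auto simp: F_def)
  show "x + y = (\<Sum>d\<in>{d. comp x d \<noteq> 0} \<union> {d. comp y d \<noteq> 0}. comp x d + comp y d)"
    unfolding F_def[symmetric] by (rule trans[OF arg_cong2[where f="(+)", OF hx hy]]) (simp add: sum.distrib)
qed

lemma comp_const: "comp (smul (const c) x) = (\<lambda>d. smul (const c) (comp x d))"
proof (rule comp_eqI[where F = "{d. comp x d \<noteq> 0}"])
  show "finite {d. comp x d \<noteq> 0}" by (rule comp_fin)
  show "smul (const c) (comp x d) \<in> gr d" for d by (simp add: comp_gr gr_const)
  show "smul (const c) (comp x d) = 0" if "d \<notin> {d. comp x d \<noteq> 0}" for d using that by simp
  show "smul (const c) x = (\<Sum>d\<in>{d. comp x d \<noteq> 0}. smul (const c) (comp x d))"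
  proof -
    have "smul (const c) x = smul (const c) (\<Sum>d\<in>{d. comp x d \<noteq> 0}. comp x d)"
      using comp_sum0[of x] by (rule arg_cong[where f="smul (const c)"])
    then show ?thesis by (simp only: scale_sum_right)
  qed
qed

lemma comp_sc: "comp (sc c x) = (\<lambda>d. sc c (comp x d))"
  unfolding sc_def by (rule comp_const)

lemma comp_homog: "x \<in> gr e \<Longrightarrow> comp x = (\<lambda>d. if d = e then x else 0)"
  by (rule comp_eqI[where F = "{e}"]) (auto simp: gr0)

lemma comp_0: "comp 0 d = 0"
  using comp_homog[OF gr0[of d]] by simp

lemma in_gr_iff: "x \<in> gr e \<longleftrightarrow> (\<forall>d. d \<noteq> e \<longrightarrow> comp x d = 0)"
proof
  assume "x \<in> gr e" then show "\<forall>d. d \<noteq> e \<longrightarrow> comp x d = 0" using comp_homog by simp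
next
  assume "\<forall>d. d \<noteq> e \<longrightarrow> comp x d = 0"
  then have "x = (\<Sum>d\<in>{e}. comp x d)" by (intro comp_sumF) auto
  then have "x = comp x e" by simp
  then show "x \<in> gr e" using comp_gr[of x e] by (rule ssubst)
qed

end




lemma linear_mh: "Vector_Spaces.linear s1 s2 h \<Longrightarrow> module_hom s1 s2 h"
  by (simp add: module_hom_iff_linear)

locale ghom = A: gm mdeg s1 gr1 + B: gm mdeg s2 gr2
  for mdeg :: "('v \<Rightarrow>\<^sub>0 nat) \<Rightarrow> 'g::ab_group_add"
    and s1 :: "('v, 'k::field) mpoly \<Rightarrow> 'a::ab_group_add \<Rightarrow> 'a" and gr1
    and s2 :: "('v, 'k) mpoly \<Rightarrow> 'b::ab_group_add \<Rightarrow> 'b" and gr2 +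
  fixes h :: "'a \<Rightarrow> 'b"
  assumes gh: "graded_hom s1 gr1 s2 gr2 h"
begin

lemma h_add: "h (x + y) = h x + h y" using gh unfolding graded_hom_def by blast
lemma h_smul: "h (s1 p x) = s2 p (h x)" using gh unfolding graded_hom_def by blast
lemma h_gr: "x \<in> gr1 d \<Longrightarrow> h x \<in> gr2 d" using gh unfolding graded_hom_def by blast

sublocale H: module_hom s1 s2 h
  by unfold_locales (simp_all add: h_add h_smul)

lemma h_sc: "h (A.sc c x) = B.sc c (h x)"
  by (simp add: A.sc_def B.sc_def h_smul)

lemma lin: "Vector_Spaces.linear A.sc B.sc h"
  unfolding module_hom_iff_linear[symmetric] module_hom_iff
  using A.vs B.vs by (simp add: module_iff_vector_space h_add h_sc)

lemma h_comp: "h (A.comp x d) = B.comp (h x) d"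
proof -
  have "B.comp (h x) = (\<lambda>d. h (A.comp x d))"
  proof (rule B.comp_eqI[where F = "{d. A.comp x d \<noteq> 0}"])
    show "finite {d. A.comp x d \<noteq> 0}" by (rule A.comp_fin)
    show "h (A.comp x d) \<in> gr2 d" for d by (rule h_gr[OF A.comp_gr])
    show "h (A.comp x d) = 0" if "d \<notin> {d. A.comp x d \<noteq> 0}" for d using that by simp
    have "h x = h (\<Sum>d\<in>{d. A.comp x d \<noteq> 0}. A.comp x d)"
      using A.comp_sum0[of x] by (rule arg_cong[where f = h])
    then show "h x = (\<Sum>d\<in>{d. A.comp x d \<noteq> 0}. h (A.comp x d))"
      by (simp only: H.sum)
  qed
  then show ?thesis by simp
qed

end

locale ses = F: ghom mdeg smulU grU smulM grM f + G: ghom mdeg smulM grM smulN grN g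
  for mdeg :: "('v \<Rightarrow>\<^sub>0 nat) \<Rightarrow> 'g::ab_group_add"
    and smulU :: "('v, 'k::field) mpoly \<Rightarrow> 'u::ab_group_add \<Rightarrow> 'u" and grU
    and smulM :: "('v, 'k) mpoly \<Rightarrow> 'm::ab_group_add \<Rightarrow> 'm" and grM
    and smulN :: "('v, 'k) mpoly \<Rightarrow> 'n::ab_group_add \<Rightarrow> 'n" and grN
    and f g +
  assumes se: "short_exact f g"
begin

lemma f_inj: "inj f" using se unfolding short_exact_def by blast
lemma g_surj: "surj g" using se unfolding short_exact_def by blast
lemma ker: "range f = {m. g m = 0}" using se unfolding short_exact_def by blast
lemma gf: "g (f u) = 0" using ker by blast
lemma ker_ex: "g m = 0 \<Longrightarrow> \<exists>u. m = f u" using ker by blast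

lemma ex_s: "\<exists>s. Vector_Spaces.linear (gm.sc smulN) (gm.sc smulM) s \<and> g \<circ> s = id"
proof (rule vector_space_pair.linear_surjective_right_inverse)
  show "vector_space_pair (gm.sc smulM) (gm.sc smulN)"
    unfolding vector_space_pair_def using F.B.vs G.B.vs by simp
  show "Vector_Spaces.linear (gm.sc smulM) (gm.sc smulN) g" by (rule G.lin)
  show "surj g" by (rule g_surj)
qed

definition s0 where "s0 = (SOME s. Vector_Spaces.linear (gm.sc smulN) (gm.sc smulM) s \<and> g \<circ> s = id)"

lemma s0: "Vector_Spaces.linear (gm.sc smulN) (gm.sc smulM) s0" "g \<circ> s0 = id"
  using someI_ex[OF ex_s] unfolding s0_def by auto

lemma s0_add: "s0 (x + y) = s0 x + s0 y"
  using module_hom.add[OF linear_mh[OF s0(1)]] .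
lemma s0_sc: "s0 (gm.sc smulN c x) = gm.sc smulM c (s0 x)"
  using module_hom.scale[OF linear_mh[OF s0(1)]] .
lemma s0_0: "s0 0 = 0"
  using module_hom.zero[OF linear_mh[OF s0(1)]] .
lemma g_s0: "g (s0 y) = y" using s0(2) by (simp add: fun_eq_iff)

definition sigma :: "'n \<Rightarrow> 'm" where
  "sigma y = (\<Sum>d\<in>{d. G.B.comp y d \<noteq> 0}. F.B.comp (s0 (G.B.comp y d)) d)"

lemma sigma_F:
  assumes "finite F" "{d. G.B.comp y d \<noteq> 0} \<subseteq> F"
  shows "sigma y = (\<Sum>d\<in>F. F.B.comp (s0 (G.B.comp y d)) d)"
  unfolding sigma_def
  by (rule sum.mono_neutral_left[OF assms]) (auto simp: s0_0 F.B.comp_0)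

lemma sigma_add: "sigma (y + z) = sigma y + sigma z"
proof -
  define F where "F = {d. G.B.comp y d \<noteq> 0} \<union> {d. G.B.comp z d \<noteq> 0}"
  have fF: "finite F" unfolding F_def using G.B.comp_fin by simp
  have "sigma (y + z) = (\<Sum>d\<in>F. F.B.comp (s0 (G.B.comp (y + z) d)) d)"
    by (rule sigma_F[OF fF]) (auto simp: F_def G.B.comp_add)
  also have "\<dots> = (\<Sum>d\<in>F. F.B.comp (s0 (G.B.comp y d)) d + F.B.comp (s0 (G.B.comp z d)) d)"
    by (simp add: G.B.comp_add s0_add F.B.comp_add)
  also have "\<dots> = sigma y + sigma z"
    by (simp add: sum.distrib sigma_F[OF fF] F_def)
  finally show ?thesis .
qed

lemma sigma_sc: "sigma (gm.sc smulN c y) = gm.sc smulM c (sigma y)"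
proof -
  define F where "F = {d. G.B.comp y d \<noteq> 0}"
  have fF: "finite F" unfolding F_def using G.B.comp_fin by simp
  have "sigma (gm.sc smulN c y) = (\<Sum>d\<in>F. F.B.comp (s0 (G.B.comp (gm.sc smulN c y) d)) d)"
    by (rule sigma_F[OF fF]) (auto simp: F_def G.B.comp_const G.B.sc_def)
  also have "\<dots> = (\<Sum>d\<in>F. gm.sc smulM c (F.B.comp (s0 (G.B.comp y d)) d))"
    by (simp add: G.B.comp_sc s0_sc F.B.comp_sc)
  also have "\<dots> = gm.sc smulM c (sigma y)"
    by (simp add: sigma_F[OF fF] F_def F.B.sc_def F.B.scale_sum_right)
  finally show ?thesis .
qed

lemma sigma_gr: "y \<in> grN e \<Longrightarrow> sigma y \<in> grM e"
proof -
  assume y: "y \<in> grN e"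
  have "sigma y = (\<Sum>d\<in>{e}. F.B.comp (s0 (G.B.comp y d)) d)"
    by (rule sigma_F) (auto simp: G.B.comp_homog[OF y])
  then show ?thesis by (simp add: F.B.comp_gr)
qed

lemma g_sigma: "g (sigma y) = y"
proof -
  have "g (sigma y) = (\<Sum>d\<in>{d. G.B.comp y d \<noteq> 0}. g (F.B.comp (s0 (G.B.comp y d)) d))"
    unfolding sigma_def by (rule G.H.sum)
  also have "\<dots> = (\<Sum>d\<in>{d. G.B.comp y d \<noteq> 0}. G.B.comp y d)"
    by (simp add: G.h_comp g_s0 G.B.comp_homog[OF G.B.comp_gr])
  also have "\<dots> = y" by (rule G.B.comp_sum0[symmetric])
  finally show ?thesis .
qed

lemma sigma_0: "sigma 0 = 0"
  using sigma_add[of 0 0] by simp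

definition fi :: "'m \<Rightarrow> 'u" where "fi = inv f"
lemma fi_f: "fi (f u) = u" unfolding fi_def using f_inj by simp
lemma f_fi: "g m = 0 \<Longrightarrow> f (fi m) = m"
  using ker_ex[of m] fi_f by auto

end




lemma sum_split_nat: "(\<Sum>i<(a::nat)+b. h i) = (\<Sum>i<a. h i) + (\<Sum>j<b. h (a + j))"
  by (induction b) (simp_all add: add.assoc)

lemma ex1_uniq: "\<exists>!x. Q x \<Longrightarrow> Q y \<Longrightarrow> Q z \<Longrightarrow> y = z" by blast

context ses
begin

definition DMs where
  "DMs DU DN = map (\<lambda>p. (fst p, f (snd p))) DU @ map (\<lambda>p. (fst p, sigma (snd p))) DN"

lemma DMs_len: "length (DMs DU DN) = length DU + length DN"
  by (simp add: DMs_def)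
lemma DMs_lt: "i < length DU \<Longrightarrow> DMs DU DN ! i = (fst (DU ! i), f (snd (DU ! i)))"
  by (simp add: DMs_def nth_append)
lemma DMs_ge: "length DU \<le> i \<Longrightarrow> i < length DU + length DN \<Longrightarrow>
   DMs DU DN ! i = (fst (DN ! (i - length DU)), sigma (snd (DN ! (i - length DU))))"
  by (simp add: DMs_def nth_append)

lemma SM_split:
  "(\<Sum>i<length DU + length DN. smulM (c i) (snd (DMs DU DN ! i))) =
   f (\<Sum>i<length DU. smulU (c i) (snd (DU ! i))) +
   (\<Sum>j<length DN. smulM (c (length DU + j)) (sigma (snd (DN ! j))))"
proof -
  have "(\<Sum>i<length DU + length DN. smulM (c i) (snd (DMs DU DN ! i))) =
     (\<Sum>i<length DU. smulM (c i) (snd (DMs DU DN ! i))) +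
     (\<Sum>j<length DN. smulM (c (length DU + j)) (snd (DMs DU DN ! (length DU + j))))"
    by (rule sum_split_nat)
  also have "(\<Sum>i<length DU. smulM (c i) (snd (DMs DU DN ! i))) =
      (\<Sum>i<length DU. smulM (c i) (f (snd (DU ! i))))"
    by (rule sum.cong) (simp_all add: DMs_lt)
  also have "\<dots> = f (\<Sum>i<length DU. smulU (c i) (snd (DU ! i)))"
    by (simp add: F.H.sum F.h_smul)
  also have "(\<Sum>j<length DN. smulM (c (length DU + j)) (snd (DMs DU DN ! (length DU + j)))) =
      (\<Sum>j<length DN. smulM (c (length DU + j)) (sigma (snd (DN ! j))))"
    by (rule sum.cong) (simp_all add: DMs_ge)
  finally show ?thesis .
qed

lemma g_SM:
  "g (f x + (\<Sum>j<length DN. smulM (c j) (sigma (snd (DN ! j))))) =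
   (\<Sum>j<length DN. smulN (c j) (snd (DN ! j)))"
  by (simp add: G.h_add gf G.H.sum G.h_smul g_sigma)

lemma stanley_M:
  assumes DU: "stanley_dec isr smulU grU DU" and DN: "stanley_dec isr smulN grN DN"
  shows "stanley_dec isr smulM grM (DMs DU DN)"
proof -
  let ?a = "length DU" and ?b = "length DN"
  have DU1: "\<And>i. i < ?a \<Longrightarrow> isr (fst (DU ! i)) \<and> (\<exists>d. snd (DU ! i) \<in> grU d) \<and>
        (\<forall>s\<in>fst (DU ! i). smulU s (snd (DU ! i)) = 0 \<longrightarrow> s = 0)"
    using DU unfolding stanley_dec_def by blast
  have DN1: "\<And>i. i < ?b \<Longrightarrow> isr (fst (DN ! i)) \<and> (\<exists>d. snd (DN ! i) \<in> grN d) \<and>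
        (\<forall>s\<in>fst (DN ! i). smulN s (snd (DN ! i)) = 0 \<longrightarrow> s = 0)"
    using DN unfolding stanley_dec_def by blast
  have DU2: "\<And>m. \<exists>!c. (\<forall>i<?a. c i \<in> fst (DU ! i)) \<and> (\<forall>i\<ge>?a. c i = 0) \<and>
          m = (\<Sum>i<?a. smulU (c i) (snd (DU ! i)))"
    using DU unfolding stanley_dec_def by blast
  have DN2: "\<And>m. \<exists>!c. (\<forall>i<?b. c i \<in> fst (DN ! i)) \<and> (\<forall>i\<ge>?b. c i = 0) \<and>
          m = (\<Sum>i<?b. smulN (c i) (snd (DN ! i)))"
    using DN unfolding stanley_dec_def by blast
  have P1: "isr (fst (DMs DU DN ! i)) \<and> (\<exists>d. snd (DMs DU DN ! i) \<in> grM d) \<and>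
        (\<forall>s\<in>fst (DMs DU DN ! i). smulM s (snd (DMs DU DN ! i)) = 0 \<longrightarrow> s = 0)"
    if i: "i < length (DMs DU DN)" for i
  proof (cases "i < ?a")
    case True
    have "smulU s (snd (DU ! i)) = 0" if "smulM s (f (snd (DU ! i))) = 0" for s
    proof -
      have "f (smulU s (snd (DU ! i))) = f 0" using that by (simp add: F.h_smul)
      then show ?thesis by (rule injD[OF f_inj])
    qed
    then show ?thesis using DU1[OF True] F.h_gr by (auto simp: DMs_lt[OF True])
  next
    case False
    then have j: "i - ?a < ?b" "?a \<le> i" using i False by (auto simp: DMs_len)
    have ann: "smulN s (snd (DN ! (i - ?a))) = 0" if "smulM s (sigma (snd (DN ! (i - ?a)))) = 0" for s
    proof -
      have "g (smulM s (sigma (snd (DN ! (i - ?a))))) = 0" using that by simp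
      then show ?thesis by (simp add: G.h_smul g_sigma)
    qed
    have ilt: "i < ?a + ?b" using i by (simp add: DMs_len)
    then show ?thesis using DN1[OF j(1)] sigma_gr ann
      by (auto simp: DMs_ge[OF j(2) ilt])
  qed
  let ?Q = "\<lambda>m c. (\<forall>i<length (DMs DU DN). c i \<in> fst (DMs DU DN ! i)) \<and>
          (\<forall>i\<ge>length (DMs DU DN). c i = 0) \<and>
          m = (\<Sum>i<length (DMs DU DN). smulM (c i) (snd (DMs DU DN ! i)))"
  have P2: "\<exists>!c. ?Q m c" for m
  proof (rule ex_ex1I)
    obtain cN where cN: "\<forall>i<?b. cN i \<in> fst (DN ! i)" "\<forall>i\<ge>?b. cN i = 0"
        "g m = (\<Sum>i<?b. smulN (cN i) (snd (DN ! i)))"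
      using DN2[of "g m"] by blast
    define m' where "m' = m - (\<Sum>j<?b. smulM (cN j) (sigma (snd (DN ! j))))"
    have "g m' = 0" unfolding m'_def
      by (simp add: G.H.diff G.H.sum G.h_smul g_sigma cN(3))
    then have fm': "f (fi m') = m'" by (rule f_fi)
    obtain cU where cU: "\<forall>i<?a. cU i \<in> fst (DU ! i)" "\<forall>i\<ge>?a. cU i = 0"
        "fi m' = (\<Sum>i<?a. smulU (cU i) (snd (DU ! i)))"
      using DU2[of "fi m'"] by blast
    define c where "c i = (if i < ?a then cU i else cN (i - ?a))" for i
    have "?Q m c"
    proof (intro conjI allI impI)
      fix i assume "i < length (DMs DU DN)"
      then show "c i \<in> fst (DMs DU DN ! i)"
        using cU(1) cN(1) by (auto simp: c_def DMs_len DMs_lt DMs_ge)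
    next
      fix i assume "length (DMs DU DN) \<le> i"
      then show "c i = 0" using cN(2) by (auto simp: c_def DMs_len)
    next
      have "(\<Sum>i<length (DMs DU DN). smulM (c i) (snd (DMs DU DN ! i))) =
        f (\<Sum>i<?a. smulU (c i) (snd (DU ! i))) +
        (\<Sum>j<?b. smulM (c (?a + j)) (sigma (snd (DN ! j))))"
        unfolding DMs_len by (rule SM_split)
      also have "(\<Sum>i<?a. smulU (c i) (snd (DU ! i))) = fi m'"
        unfolding cU(3) by (rule sum.cong) (simp_all add: c_def)
      also have "(\<Sum>j<?b. smulM (c (?a + j)) (sigma (snd (DN ! j)))) =
          (\<Sum>j<?b. smulM (cN j) (sigma (snd (DN ! j))))"
        by (rule sum.cong) (simp_all add: c_def)
      finally have X: "(\<Sum>i<length (DMs DU DN). smulM (c i) (snd (DMs DU DN ! i))) =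
          f (fi m') + (\<Sum>j<?b. smulM (cN j) (sigma (snd (DN ! j))))" .
      show "m = (\<Sum>i<length (DMs DU DN). smulM (c i) (snd (DMs DU DN ! i)))"
        unfolding X fm' by (simp add: m'_def)
    qed
    then show "\<exists>c. ?Q m c" by blast
  next
    fix c c' assume Qc: "?Q m c" and Qc': "?Q m c'"
    have split: "m = f (\<Sum>i<?a. smulU (k i) (snd (DU ! i))) +
        (\<Sum>j<?b. smulM (k (?a + j)) (sigma (snd (DN ! j))))" if "?Q m k" for k
    proof -
      have "m = (\<Sum>i<length (DMs DU DN). smulM (k i) (snd (DMs DU DN ! i)))" using that by blast
      also have "\<dots> = f (\<Sum>i<?a. smulU (k i) (snd (DU ! i))) +
        (\<Sum>j<?b. smulM (k (?a + j)) (sigma (snd (DN ! j))))"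
        unfolding DMs_len by (rule SM_split)
      finally show ?thesis .
    qed
    let ?QN = "\<lambda>k. (\<forall>i<?b. k i \<in> fst (DN ! i)) \<and> (\<forall>i\<ge>?b. k i = 0) \<and>
          g m = (\<Sum>i<?b. smulN (k i) (snd (DN ! i)))"
    have QN: "?QN (\<lambda>j. k (?a + j))" if "?Q m k" for k
    proof (intro conjI allI impI)
      fix i assume "i < ?b"
      then have "k (?a + i) \<in> fst (DMs DU DN ! (?a + i))" using that by (simp add: DMs_len)
      then show "k (?a + i) \<in> fst (DN ! i)" using \<open>i < ?b\<close> by (simp add: DMs_ge)
    next
      fix i assume "?b \<le> i"
      then show "k (?a + i) = 0" using that by (auto simp: DMs_len)
    next
      show "g m = (\<Sum>i<?b. smulN (k (?a + i)) (snd (DN ! i)))"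
        using arg_cong[where f = g, OF split[OF that]] g_SM by simp
    qed
    have eqN: "(\<lambda>j. c (?a + j)) = (\<lambda>j. c' (?a + j))"
      by (rule ex1_uniq[where Q = ?QN, OF DN2[of "g m"] QN[OF Qc] QN[OF Qc']])
    have "f (\<Sum>i<?a. smulU (c i) (snd (DU ! i))) = f (\<Sum>i<?a. smulU (c' i) (snd (DU ! i)))"
    proof -
      have BB: "(\<Sum>j<?b. smulM (c (?a + j)) (sigma (snd (DN ! j)))) =
            (\<Sum>j<?b. smulM (c' (?a + j)) (sigma (snd (DN ! j))))"
        using eqN by (simp add: fun_eq_iff)
      have "f (\<Sum>i<?a. smulU (c i) (snd (DU ! i))) + (\<Sum>j<?b. smulM (c (?a + j)) (sigma (snd (DN ! j)))) =
         f (\<Sum>i<?a. smulU (c' i) (snd (DU ! i))) + (\<Sum>j<?b. smulM (c' (?a + j)) (sigma (snd (DN ! j))))"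
        using split[OF Qc] split[OF Qc'] by (rule trans[OF sym])
      then show ?thesis unfolding BB by (rule add_right_imp_eq)
    qed
    then have eqS: "(\<Sum>i<?a. smulU (c i) (snd (DU ! i))) = (\<Sum>i<?a. smulU (c' i) (snd (DU ! i)))"
      using f_inj by (simp add: inj_eq)
    let ?QU = "\<lambda>k. (\<forall>i<?a. k i \<in> fst (DU ! i)) \<and> (\<forall>i\<ge>?a. k i = 0) \<and>
          (\<Sum>i<?a. smulU (c i) (snd (DU ! i))) = (\<Sum>i<?a. smulU (k i) (snd (DU ! i)))"
    have QU: "?QU (\<lambda>i. if i < ?a then k i else 0)" if "?Q m k"
        "(\<Sum>i<?a. smulU (c i) (snd (DU ! i))) = (\<Sum>i<?a. smulU (k i) (snd (DU ! i)))" for k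
    proof (intro conjI allI impI)
      fix i assume "i < ?a"
      then have "i < ?a + ?b" by simp
      then have "k i \<in> fst (DMs DU DN ! i)" using that(1) by (simp add: DMs_len)
      then show "(if i < ?a then k i else 0) \<in> fst (DU ! i)" using \<open>i < ?a\<close> by (simp add: DMs_lt)
    next
      fix i assume "?a \<le> i" then show "(if i < ?a then k i else 0) = 0" by simp
    next
      show "(\<Sum>i<?a. smulU (c i) (snd (DU ! i))) = (\<Sum>i<?a. smulU (if i < ?a then k i else 0) (snd (DU ! i)))"
        using that(2) by simp
    qed
    have eqU: "(\<lambda>i. if i < ?a then c i else 0) = (\<lambda>i. if i < ?a then c' i else 0)"
      by (rule ex1_uniq[where Q = ?QU, OF DU2[of "\<Sum>i<?a. smulU (c i) (snd (DU ! i))"] QU[OF Qc refl] QU[OF Qc' eqS]])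
    show "c = c'"
    proof
      fix i
      show "c i = c' i"
      proof (cases "i < ?a")
        case True then show ?thesis using fun_cong[OF eqU, of i] by simp
      next
        case False
        show ?thesis
        proof (cases "i < ?a + ?b")
          case True
          then show ?thesis using fun_cong[OF eqN, of "i - ?a"] False by simp
        next
          case False
          then show ?thesis using Qc Qc' by (simp add: DMs_len)
        qed
      qed
    qed
  qed
  show ?thesis unfolding stanley_dec_def using P1 P2 by blast
qed

end




definition join :: "nat \<Rightarrow> (nat \<Rightarrow> 'a::zero) \<Rightarrow> (nat \<Rightarrow> 'a) \<Rightarrow> nat \<Rightarrow> 'a" where
  "join a cU cN = (\<lambda>i. if i < a then cU i else cN (i - a))"

lemma join_dsum:
  assumes "cU \<in> dsum HU" "cN \<in> dsum HN"
  shows "join (length HU) cU cN \<in> dsum (HU @ HN)"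
proof -
  have "(\<forall>i<length HU. cU i \<in> fst (HU ! i)) \<and> (\<forall>i\<ge>length HU. cU i = 0)"
       "(\<forall>i<length HN. cN i \<in> fst (HN ! i)) \<and> (\<forall>i\<ge>length HN. cN i = 0)"
    using assms unfolding dsum_def by auto
  then show ?thesis unfolding dsum_def join_def
    by (auto simp: nth_append)
qed

lemma join_deg:
  assumes "cU \<in> dsum_deg mdeg HU d" "cN \<in> dsum_deg mdeg HN d"
  shows "join (length HU) cU cN \<in> dsum_deg mdeg (HU @ HN) d"
proof -
  have a: "cU \<in> dsum HU" "cN \<in> dsum HN" using assms unfolding dsum_deg_def by auto
  have b: "\<forall>i<length HU. cU i \<in> homog mdeg (d - snd (HU ! i))"
     "\<forall>i<length HN. cN i \<in> homog mdeg (d - snd (HN ! i))"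
    using assms unfolding dsum_deg_def by auto
  show ?thesis unfolding dsum_deg_def
  proof (intro CollectI conjI allI impI)
    show "join (length HU) cU cN \<in> dsum (HU @ HN)" by (rule join_dsum[OF a])
    fix i assume "i < length (HU @ HN)"
    then show "join (length HU) cU cN i \<in> homog mdeg (d - snd ((HU @ HN) ! i))"
      using b by (auto simp: join_def nth_append)
  qed
qed

lemma split_dsum:
  assumes "c \<in> dsum (HU @ HN)"
  shows "(\<lambda>i. if i < length HU then c i else 0) \<in> dsum HU"
    "(\<lambda>j. c (length HU + j)) \<in> dsum HN"
    "c = join (length HU) (\<lambda>i. if i < length HU then c i else 0) (\<lambda>j. c (length HU + j))"
proof -
  have c: "\<forall>i<length HU + length HN. c i \<in> fst ((HU @ HN) ! i)" "\<forall>i\<ge>length HU + length HN. c i = 0"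
    using assms unfolding dsum_def by auto
  show "(\<lambda>i. if i < length HU then c i else 0) \<in> dsum HU"
    unfolding dsum_def
  proof (intro CollectI conjI allI impI)
    fix i assume "i < length HU"
    then show "(if i < length HU then c i else 0) \<in> fst (HU ! i)"
      using c(1)[rule_format, of i] by (simp add: nth_append)
  qed simp
  show "(\<lambda>j. c (length HU + j)) \<in> dsum HN"
    unfolding dsum_def
  proof (intro CollectI conjI allI impI)
    fix i assume "i < length HN"
    then show "c (length HU + i) \<in> fst (HN ! i)" using c(1)[rule_format, of "length HU + i"]
      by (simp add: nth_append)
  next
    fix i assume "length HN \<le> i"
    then show "c (length HU + i) = 0" using c(2) by simp
  qed
  show "c = join (length HU) (\<lambda>i. if i < length HU then c i else 0) (\<lambda>j. c (length HU + j))"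
    by (auto simp: join_def fun_eq_iff)
qed

lemma split_deg:
  assumes "c \<in> dsum_deg mdeg (HU @ HN) d"
  shows "(\<lambda>i. if i < length HU then c i else 0) \<in> dsum_deg mdeg HU d"
    "(\<lambda>j. c (length HU + j)) \<in> dsum_deg mdeg HN d"
proof -
  have a: "c \<in> dsum (HU @ HN)" using assms unfolding dsum_deg_def by auto
  have b: "\<forall>i<length HU + length HN. c i \<in> homog mdeg (d - snd ((HU @ HN) ! i))"
    using assms unfolding dsum_deg_def by auto
  show "(\<lambda>i. if i < length HU then c i else 0) \<in> dsum_deg mdeg HU d"
    unfolding dsum_deg_def
  proof (intro CollectI conjI allI impI)
    show "(\<lambda>i. if i < length HU then c i else 0) \<in> dsum HU" by (rule split_dsum(1)[OF a])
    fix i assume "i < length HU"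
    then show "(if i < length HU then c i else 0) \<in> homog mdeg (d - snd (HU ! i))"
      using b[rule_format, of i] by (simp add: nth_append)
  qed
  show "(\<lambda>j. c (length HU + j)) \<in> dsum_deg mdeg HN d"
    unfolding dsum_deg_def
  proof (intro CollectI conjI allI impI)
    show "(\<lambda>j. c (length HU + j)) \<in> dsum HN" by (rule split_dsum(2)[OF a])
    fix i assume "i < length HN"
    then show "c (length HU + i) \<in> homog mdeg (d - snd (HN ! i))"
      using b[rule_format, of "length HU + i"] by (simp add: nth_append)
  qed
qed

lemma join_inj:
  assumes "cU \<in> dsum HU" "cU' \<in> dsum HU" "join (length HU) cU cN = join (length HU) cU' cN'"
  shows "cU = cU'" "cN = cN'"
proof -
  show "cU = cU'"
  proof
    fix i show "cU i = cU' i"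
    proof (cases "i < length HU")
      case True then show ?thesis using fun_cong[OF assms(3), of i] by (simp add: join_def)
    next
      case False then show ?thesis using assms(1,2) unfolding dsum_def by auto
    qed
  qed
  show "cN = cN'"
  proof
    fix j show "cN j = cN' j" using fun_cong[OF assms(3), of "length HU + j"] by (simp add: join_def)
  qed
qed

context ses
begin

definition r where "r m = fi (m - sigma (g m))"

lemma g_diff: "g (m - sigma (g m)) = 0"
  by (simp add: G.H.diff g_sigma)

lemma f_r: "f (r m) = m - sigma (g m)"
  unfolding r_def by (rule f_fi[OF g_diff])

lemma r_fs: "r (f u + sigma n) = u"
proof -
  have "g (f u + sigma n) = n" by (simp add: G.h_add gf g_sigma)
  then show ?thesis unfolding r_def by (simp add: fi_f)
qed

lemma r_add: "r (x + y) = r x + r y"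
proof -
  have "f (r (x + y)) = f (r x + r y)"
    by (simp add: f_r F.h_add G.h_add sigma_add)
  then show ?thesis by (rule injD[OF f_inj])
qed

lemma r_sc: "r (smulM (const c) x) = smulU (const c) (r x)"
proof -
  have s: "sigma (g (smulM (const c) x)) = smulM (const c) (sigma (g x))"
    using sigma_sc[of c "g x"] by (simp add: G.h_smul G.B.sc_def F.B.sc_def)
  have "f (r (smulM (const c) x)) = f (smulU (const c) (r x))"
    by (simp add: f_r F.h_smul s F.B.scale_right_diff_distrib)
  then show ?thesis by (rule injD[OF f_inj])
qed

lemma grU_of_f: "f u \<in> grM d \<Longrightarrow> u \<in> grU d"
proof -
  assume fu: "f u \<in> grM d"
  have "F.A.comp u e = 0" if "e \<noteq> d" for e
  proof -
    have "f (F.A.comp u e) = f 0" using fu that F.B.in_gr_iff by (simp add: F.h_comp)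
    then show ?thesis by (rule injD[OF f_inj])
  qed
  then show ?thesis using F.A.in_gr_iff by blast
qed

lemma hilbert_M:
  assumes HU: "hilbert_dec isr mdeg smulU grU HU" and HN: "hilbert_dec isr mdeg smulN grN HN"
  shows "hilbert_dec isr mdeg smulM grM (HU @ HN)"
proof -
  obtain pU where pU: "bij_betw pU UNIV (dsum HU)" "\<And>x y. pU (x + y) = pU x + pU y"
      "\<And>c x. pU (smulU (const c) x) = (\<lambda>i. const c * pU x i)" "\<And>d. pU ` grU d = dsum_deg mdeg HU d"
    using HU unfolding hilbert_dec_def by blast
  obtain pN where pN: "bij_betw pN UNIV (dsum HN)" "\<And>x y. pN (x + y) = pN x + pN y"
      "\<And>c x. pN (smulN (const c) x) = (\<lambda>i. const c * pN x i)" "\<And>d. pN ` grN d = dsum_deg mdeg HN d"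
    using HN unfolding hilbert_dec_def by blast
  have isrU: "\<forall>i<length HU. isr (fst (HU ! i))" using HU unfolding hilbert_dec_def by blast
  have isrN: "\<forall>i<length HN. isr (fst (HN ! i))" using HN unfolding hilbert_dec_def by blast
  define phi where "phi m = join (length HU) (pU (r m)) (pN (g m))" for m
  have pUin: "pU x \<in> dsum HU" for x using pU(1) unfolding bij_betw_def by blast
  have pNin: "pN x \<in> dsum HN" for x using pN(1) unfolding bij_betw_def by blast
  have phi_fs: "phi (f u + sigma n) = join (length HU) (pU u) (pN n)" for u n
  proof -
    have "g (f u + sigma n) = n" by (simp add: G.h_add gf g_sigma)
    then show ?thesis unfolding phi_def by (simp add: r_fs)
  qed
  have decomp: "m = f (r m) + sigma (g m)" for m by (simp add: f_r)
  have inj: "inj phi"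
  proof (rule injI)
    fix x y assume "phi x = phi y"
    then have "pU (r x) = pU (r y)" "pN (g x) = pN (g y)"
      using join_inj[OF pUin pUin] unfolding phi_def by blast+
    then have "r x = r y" "g x = g y"
      using pU(1) pN(1) unfolding bij_betw_def by (auto dest: injD)
    then have "f (r x) + sigma (g x) = f (r y) + sigma (g y)" by simp
    have "x = f (r x) + sigma (g x)" by (rule decomp)
    also have "\<dots> = f (r y) + sigma (g y)" by fact
    also have "\<dots> = y" by (rule decomp[symmetric])
    finally show "x = y" .
  qed
  have surj: "phi ` UNIV = dsum (HU @ HN)"
  proof
    show "phi ` UNIV \<subseteq> dsum (HU @ HN)" unfolding phi_def using join_dsum[OF pUin pNin] by blast
    show "dsum (HU @ HN) \<subseteq> phi ` UNIV"
    proof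
      fix c assume c: "c \<in> dsum (HU @ HN)"
      have "(\<lambda>i. if i < length HU then c i else 0) \<in> pU ` UNIV"
        using split_dsum(1)[OF c] pU(1) unfolding bij_betw_def by simp
      then obtain u where u: "pU u = (\<lambda>i. if i < length HU then c i else 0)" by (auto elim!: rangeE)
      have "(\<lambda>j. c (length HU + j)) \<in> pN ` UNIV"
        using split_dsum(2)[OF c] pN(1) unfolding bij_betw_def by simp
      then obtain n where n: "pN n = (\<lambda>j. c (length HU + j))" by (auto elim!: rangeE)
      have "phi (f u + sigma n) = c" unfolding phi_fs u n by (rule split_dsum(3)[OF c, symmetric])
      then show "c \<in> phi ` UNIV" by (metis rangeI)
    qed
  qed
  have add: "phi (x + y) = phi x + phi y" for x y
    unfolding phi_def by (simp add: r_add G.h_add pU(2) pN(2) join_def fun_eq_iff)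
  have scl: "phi (smulM (const c) x) = (\<lambda>i. const c * phi x i)" for c x
    unfolding phi_def by (simp add: r_sc G.h_smul pU(3) pN(3) join_def fun_eq_iff)
  have deg: "phi ` grM d = dsum_deg mdeg (HU @ HN) d" for d
  proof
    show "phi ` grM d \<subseteq> dsum_deg mdeg (HU @ HN) d"
    proof
      fix c assume "c \<in> phi ` grM d"
      then obtain m where m: "m \<in> grM d" "c = phi m" by blast
      have gm: "g m \<in> grN d" by (rule G.h_gr[OF m(1)])
      have "f (r m) \<in> grM d" unfolding f_r using m(1) sigma_gr[OF gm] by (rule F.B.gr_diff)
      then have "r m \<in> grU d" by (rule grU_of_f)
      then have "pU (r m) \<in> dsum_deg mdeg HU d" "pN (g m) \<in> dsum_deg mdeg HN d"
        using pU(4)[of d] pN(4)[of d] gm by blast+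
      then show "c \<in> dsum_deg mdeg (HU @ HN) d" unfolding m(2) phi_def by (rule join_deg)
    qed
    show "dsum_deg mdeg (HU @ HN) d \<subseteq> phi ` grM d"
    proof
      fix c assume c: "c \<in> dsum_deg mdeg (HU @ HN) d"
      have c': "c \<in> dsum (HU @ HN)" using c unfolding dsum_deg_def by blast
      have "(\<lambda>i. if i < length HU then c i else 0) \<in> pU ` grU d"
        using split_deg(1)[OF c] pU(4)[of d] by simp
      then obtain u where u: "u \<in> grU d" "pU u = (\<lambda>i. if i < length HU then c i else 0)"
        by (auto elim!: imageE)
      have "(\<lambda>j. c (length HU + j)) \<in> pN ` grN d"
        using split_deg(2)[OF c] pN(4)[of d] by simp
      then obtain n where n: "n \<in> grN d" "pN n = (\<lambda>j. c (length HU + j))"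
        by (auto elim!: imageE)
      have "phi (f u + sigma n) = c" unfolding phi_fs u n by (rule split_dsum(3)[OF c', symmetric])
      moreover have "f u + sigma n \<in> grM d"
        using F.h_gr[OF u(1)] sigma_gr[OF n(1)] by (rule F.B.gr_add)
      ultimately show "c \<in> phi ` grM d" by blast
    qed
  qed
  have isr: "\<forall>i<length (HU @ HN). isr (fst ((HU @ HN) ! i))"
    using isrU isrN by (auto simp: nth_append)
  have bij: "bij_betw phi UNIV (dsum (HU @ HN))" unfolding bij_betw_def using inj surj by simp
  show ?thesis unfolding hilbert_dec_def
  proof (intro conjI)
    show "\<forall>i<length (HU @ HN). isr (fst ((HU @ HN) ! i))" by (rule isr)
    show "\<exists>\<phi>. bij_betw \<phi> UNIV (dsum (HU @ HN)) \<and> (\<forall>x y. \<phi> (x + y) = \<phi> x + \<phi> y) \<and>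
        (\<forall>c x. \<phi> (smulM (const c) x) = (\<lambda>i. const c * \<phi> x i)) \<and>
        (\<forall>d. \<phi> ` grM d = dsum_deg mdeg (HU @ HN) d)"
      by (rule exI[of _ phi]) (intro conjI allI bij add scl deg)
  qed
qed

end




lemma dec_depth_map:
  "map (\<lambda>p. rdim (fst p)) D = map (\<lambda>p. rdim (fst p)) D' \<Longrightarrow> dec_depth D = dec_depth D'"
  unfolding dec_depth_def
  by (metis (no_types, lifting) Nil_is_map_conv list.map_comp comp_def)

lemma dec_depth_append: "dec_depth (A @ B) = min (dec_depth A) (dec_depth B)"
proof (cases "A = []")
  case True then show ?thesis by (simp add: dec_depth_def)
next
  case A: False
  show ?thesis
  proof (cases "B = []")
    case True then show ?thesis by (simp add: dec_depth_def)
  next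
    case B: False
    have "Min (set (map (\<lambda>p. rdim (fst p)) (A @ B))) =
          min (Min (set (map (\<lambda>p. rdim (fst p)) A))) (Min (set (map (\<lambda>p. rdim (fst p)) B)))"
      using A B by (simp add: Min_Un)
    then show ?thesis using A B by (simp add: dec_depth_def)
  qed
qed

lemma sup_min:
  fixes A B C :: "enat set"
  assumes "\<And>a b. a \<in> A \<Longrightarrow> b \<in> B \<Longrightarrow> min a b \<in> C"
  shows "min (Sup A) (Sup B) \<le> Sup C"
proof (rule ccontr)
  assume "\<not> min (Sup A) (Sup B) \<le> Sup C"
  then have lt: "Sup C < Sup A" "Sup C < Sup B" by (simp_all add: min_le_iff_disj not_le)
  obtain a where a: "a \<in> A" "Sup C < a" using lt(1) less_Sup_iff by blast
  obtain b where b: "b \<in> B" "Sup C < b" using lt(2) less_Sup_iff by blast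
  have "min a b \<in> C" using assms a b by blast
  then have "min a b \<le> Sup C" by (rule Sup_upper)
  then show False using a b by (simp add: min_def split: if_splits)
qed

context ses
begin

lemma depth_DMs: "dec_depth (DMs DU DN) = min (dec_depth DU) (dec_depth DN)"
proof -
  have "dec_depth (DMs DU DN) = min (dec_depth (map (\<lambda>p. (fst p, f (snd p))) DU))
        (dec_depth (map (\<lambda>p. (fst p, sigma (snd p))) DN))"
    unfolding DMs_def by (rule dec_depth_append)
  also have "dec_depth (map (\<lambda>p. (fst p, f (snd p))) DU) = dec_depth DU"
    by (rule dec_depth_map) simp
  also have "dec_depth (map (\<lambda>p. (fst p, sigma (snd p))) DN) = dec_depth DN"
    by (rule dec_depth_map) simp
  finally show ?thesis .
qed

lemma stanley_part:
  "has_stanley isr smulU grU \<and> has_stanley isr smulN grN \<longrightarrow>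
   has_stanley isr smulM grM \<and>
   Stdepth isr smulM grM \<ge> min (Stdepth isr smulU grU) (Stdepth isr smulN grN)"
proof (intro impI conjI)
  assume h: "has_stanley isr smulU grU \<and> has_stanley isr smulN grN"
  then obtain DU DN where "stanley_dec isr smulU grU DU" "stanley_dec isr smulN grN DN"
    unfolding has_stanley_def by blast
  then show "has_stanley isr smulM grM" unfolding has_stanley_def using stanley_M by blast
  show "Stdepth isr smulM grM \<ge> min (Stdepth isr smulU grU) (Stdepth isr smulN grN)"
    unfolding Stdepth_def
  proof (rule sup_min)
    fix a b
    assume "a \<in> dec_depth ` {D. stanley_dec isr smulU grU D}" "b \<in> dec_depth ` {D. stanley_dec isr smulN grN D}"
    then obtain DU DN where "stanley_dec isr smulU grU DU" "stanley_dec isr smulN grN DN"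
      "a = dec_depth DU" "b = dec_depth DN" by blast
    then show "min a b \<in> dec_depth ` {D. stanley_dec isr smulM grM D}"
      using stanley_M depth_DMs by (metis (mono_tags, lifting) imageI mem_Collect_eq)
  qed
qed

lemma hilbert_part:
  "has_hilbert isr mdeg smulU grU \<and> has_hilbert isr mdeg smulN grN \<longrightarrow>
   has_hilbert isr mdeg smulM grM \<and>
   Hdepth isr mdeg smulM grM \<ge> min (Hdepth isr mdeg smulU grU) (Hdepth isr mdeg smulN grN)"
proof (intro impI conjI)
  assume h: "has_hilbert isr mdeg smulU grU \<and> has_hilbert isr mdeg smulN grN"
  then obtain HU HN where "hilbert_dec isr mdeg smulU grU HU" "hilbert_dec isr mdeg smulN grN HN"
    unfolding has_hilbert_def by blast
  then show "has_hilbert isr mdeg smulM grM" unfolding has_hilbert_def using hilbert_M by blast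
  show "Hdepth isr mdeg smulM grM \<ge> min (Hdepth isr mdeg smulU grU) (Hdepth isr mdeg smulN grN)"
    unfolding Hdepth_def
  proof (rule sup_min)
    fix a b
    assume "a \<in> dec_depth ` {H. hilbert_dec isr mdeg smulU grU H}" "b \<in> dec_depth ` {H. hilbert_dec isr mdeg smulN grN H}"
    then obtain HU HN where "hilbert_dec isr mdeg smulU grU HU" "hilbert_dec isr mdeg smulN grN HN"
      "a = dec_depth HU" "b = dec_depth HN" by blast
    then show "min a b \<in> dec_depth ` {H. hilbert_dec isr mdeg smulM grM H}"
      using hilbert_M dec_depth_append by (metis (mono_tags, lifting) imageI mem_Collect_eq)
  qed
qed

end

lemma generic:
  fixes mdeg :: "('v \<Rightarrow>\<^sub>0 nat) \<Rightarrow> 'g::ab_group_add"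
    and smulU :: "('v, 'k::field) mpoly \<Rightarrow> 'u::ab_group_add \<Rightarrow> 'u"
    and smulM :: "('v, 'k) mpoly \<Rightarrow> 'm::ab_group_add \<Rightarrow> 'm"
    and smulN :: "('v, 'k) mpoly \<Rightarrow> 'n::ab_group_add \<Rightarrow> 'n"
  shows "graded_module mdeg smulU grU \<and> graded_module mdeg smulM grM \<and>
      graded_module mdeg smulN grN \<and>
      graded_hom smulU grU smulM grM f \<and> graded_hom smulM grM smulN grN g \<and> short_exact f g \<longrightarrow>
      ((has_stanley isr smulU grU \<and> has_stanley isr smulN grN \<longrightarrow>
          has_stanley isr smulM grM \<and>
          Stdepth isr smulM grM \<ge>
            min (Stdepth isr smulU grU) (Stdepth isr smulN grN)) \<and>
       (has_hilbert isr mdeg smulU grU \<and> has_hilbert isr mdeg smulN grN \<longrightarrow>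
          has_hilbert isr mdeg smulM grM \<and>
          Hdepth isr mdeg smulM grM \<ge>
            min (Hdepth isr mdeg smulU grU) (Hdepth isr mdeg smulN grN)))"
proof
  assume a: "graded_module mdeg smulU grU \<and> graded_module mdeg smulM grM \<and>
      graded_module mdeg smulN grN \<and>
      graded_hom smulU grU smulM grM f \<and> graded_hom smulM grM smulN grN g \<and> short_exact f g"
  interpret ses mdeg smulU grU smulM grM smulN grN f g
    by (unfold_locales) (use a gm_def in auto)
  show "(has_stanley isr smulU grU \<and> has_stanley isr smulN grN \<longrightarrow>
          has_stanley isr smulM grM \<and>
          Stdepth isr smulM grM \<ge>
            min (Stdepth isr smulU grU) (Stdepth isr smulN grN)) \<and>
       (has_hilbert isr mdeg smulU grU \<and> has_hilbert isr mdeg smulN grN \<longrightarrow>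
          has_hilbert isr mdeg smulM grM \<and>
          Hdepth isr mdeg smulM grM \<ge>
            min (Hdepth isr mdeg smulU grU) (Hdepth isr mdeg smulN grN))"
    using stanley_part hilbert_part by blast
qed



theorem proposition2p6:
  shows
  "(\<forall>(smulU :: ('v::finite, 'k::field) mpoly \<Rightarrow> 'u::ab_group_add \<Rightarrow> 'u)
      (grU :: ('v \<Rightarrow> int) \<Rightarrow> 'u set)
      (smulM :: ('v, 'k) mpoly \<Rightarrow> 'm::ab_group_add \<Rightarrow> 'm) (grM :: ('v \<Rightarrow> int) \<Rightarrow> 'm set)
      (smulN :: ('v, 'k) mpoly \<Rightarrow> 'n::ab_group_add \<Rightarrow> 'n) (grN :: ('v \<Rightarrow> int) \<Rightarrow> 'n set)
      (f :: 'u \<Rightarrow> 'm) (g :: 'm \<Rightarrow> 'n).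
      graded_module mdeg_multi smulU grU \<and> graded_module mdeg_multi smulM grM \<and>
      graded_module mdeg_multi smulN grN \<and>
      graded_hom smulU grU smulM grM f \<and> graded_hom smulM grM smulN grN g \<and> short_exact f g \<longrightarrow>
      ((has_stanley retract_multi smulU grU \<and> has_stanley retract_multi smulN grN \<longrightarrow>
          has_stanley retract_multi smulM grM \<and>
          Stdepth retract_multi smulM grM \<ge>
            min (Stdepth retract_multi smulU grU) (Stdepth retract_multi smulN grN)) \<and>
       (has_hilbert retract_multi mdeg_multi smulU grU \<and> has_hilbert retract_multi mdeg_multi smulN grN \<longrightarrow>
          has_hilbert retract_multi mdeg_multi smulM grM \<and>
          Hdepth retract_multi mdeg_multi smulM grM \<ge>
            min (Hdepth retract_multi mdeg_multi smulU grU) (Hdepth retract_multi mdeg_multi smulN grN))))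
   \<and>
   (\<forall>(smulU :: ('v, 'k) mpoly \<Rightarrow> 'u \<Rightarrow> 'u) (grU :: int \<Rightarrow> 'u set)
      (smulM :: ('v, 'k) mpoly \<Rightarrow> 'm \<Rightarrow> 'm) (grM :: int \<Rightarrow> 'm set)
      (smulN :: ('v, 'k) mpoly \<Rightarrow> 'n \<Rightarrow> 'n) (grN :: int \<Rightarrow> 'n set)
      (f :: 'u \<Rightarrow> 'm) (g :: 'm \<Rightarrow> 'n).
      graded_module mdeg_std smulU grU \<and> graded_module mdeg_std smulM grM \<and>
      graded_module mdeg_std smulN grN \<and>
      graded_hom smulU grU smulM grM f \<and> graded_hom smulM grM smulN grN g \<and> short_exact f g \<longrightarrow>
      ((has_stanley retract_std smulU grU \<and> has_stanley retract_std smulN grN \<longrightarrow>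
          has_stanley retract_std smulM grM \<and>
          Stdepth retract_std smulM grM \<ge>
            min (Stdepth retract_std smulU grU) (Stdepth retract_std smulN grN)) \<and>
       (has_hilbert retract_std mdeg_std smulU grU \<and> has_hilbert retract_std mdeg_std smulN grN \<longrightarrow>
          has_hilbert retract_std mdeg_std smulM grM \<and>
          Hdepth retract_std mdeg_std smulM grM \<ge>
            min (Hdepth retract_std mdeg_std smulU grU) (Hdepth retract_std mdeg_std smulN grN))))"
  by (intro conjI allI; rule generic)

end
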